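(* Let $(\Omega,\mathcal F,P)$ be a probability space and $(\theta_k)_{k\in\mathbb{Z}^d}$ a $d$-parameter group of $P$-preserving transformations such that $P$ is strongly mixing with respect to $(\theta_k)_{k\in\mathbb{Z}^d}$. Let $I$ be a set and $(k_n(t))_{n\in\mathbb{N}}$, $t\in I$, a family of $\mathbb{Z}^d$-valued sequences such that for all $m\in\mathbb{N}$ $$\lim_{n\to\infty}\frac1{n^2}\sup_{t\in I}\big|\{1\le i,j\le n:\ \|k_i(t)-k_j(t)\|\le m\}\big|=0.$$ Then for every $1\le p<\infty$ and every $f\in L^p(\Omega,\mathcal F,P)$, $$\sup_{t\in I}\Big\|\frac1n\sum_{i=0}^{n-1}f\circ\theta_{k_i(t)}-E[f]\Big\|_{L^p(P)}\to0\quad(n\to\infty).$$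
   Context: $\|\cdot\|$ is the maximum norm on $\mathbb{Z}^d$. A $d$-parameter group of $P$-preserving transformations: each $\theta_k$ measurable and $P$-preserving, $\theta_0=\mathrm{Id}$, $\theta_k\circ\theta_l=\theta_{k+l}$, $\theta_{-k}=\theta_k^{-1}$. $P$ is strongly mixing w.r.t. $(\theta_k)$ if $P(A\cap\theta_k^{-1}B)\to P(A)P(B)$ as $\|k\|\to\infty$, for all $A,B\in\mathcal F$. $E$ denotes expectation w.r.t. $P$. *)

theory Defs
  imports "HOL-Probability.Probability"
begin

text \<open>Maximum norm on Z^d, with Z^d rendered as int ^ 'd for a finite index type 'd.\<close>
definition maxnorm :: "int ^ 'd \<Rightarrow> int" where
  "maxnorm k = Max (range (\<lambda>i. \<bar>k $ i\<bar>))"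

definition dparam_group :: "'a measure \<Rightarrow> (int ^ 'd \<Rightarrow> 'a \<Rightarrow> 'a) \<Rightarrow> bool" where
  "dparam_group M \<theta> \<longleftrightarrow>
     (\<forall>k. \<theta> k \<in> M \<rightarrow>\<^sub>M M \<and> distr M M (\<theta> k) = M) \<and>
     (\<forall>x\<in>space M. \<theta> 0 x = x) \<and>
     (\<forall>k l. \<forall>x\<in>space M. \<theta> k (\<theta> l x) = \<theta> (k + l) x) \<and>
     (\<forall>k. \<forall>x\<in>space M. \<theta> (- k) (\<theta> k x) = x \<and> \<theta> k (\<theta> (- k) x) = x)"

definition strongly_mixing :: "'a measure \<Rightarrow> (int ^ 'd \<Rightarrow> 'a \<Rightarrow> 'a) \<Rightarrow> bool" where
  "strongly_mixing M \<theta> \<longleftrightarrow>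
     (\<forall>A\<in>sets M. \<forall>B\<in>sets M. \<forall>\<epsilon>>0. \<exists>R. \<forall>k. maxnorm k > R \<longrightarrow>
        \<bar>measure M (A \<inter> (\<theta> k -` B \<inter> space M)) - measure M A * measure M B\<bar> < \<epsilon>)"

definition Lp_norm :: "'a measure \<Rightarrow> real \<Rightarrow> ('a \<Rightarrow> real) \<Rightarrow> real" where
  "Lp_norm M p g = (integral\<^sup>L M (\<lambda>x. \<bar>g x\<bar> powr p)) powr (1 / p)"

definition in_Lp :: "'a measure \<Rightarrow> real \<Rightarrow> ('a \<Rightarrow> real) \<Rightarrow> bool" where
  "in_Lp M p f \<longleftrightarrow> f \<in> borel_measurable M \<and> integrable M (\<lambda>x. \<bar>f x\<bar> powr p)"

end

theory Submission
  imports Defs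
begin


lemma maxnorm_minus: "maxnorm (- v) = maxnorm v"
  unfolding maxnorm_def by simp

lemma powr_convex0:
  assumes p: "(p::real) \<ge> 1"
  shows "convex_on {0..} (\<lambda>x::real. x powr p)"
proof (rule convex_onI)
  show "convex {0::real..}" by simp
  fix t x y :: real assume t: "0 < t" "t < 1" and xy: "x \<in> {0..}" "y \<in> {0..}"
  have tp: "t powr p \<le> t" using powr_mono'[of 1 p t] t p by simp
  have tp': "(1-t) powr p \<le> 1 - t" using powr_mono'[of 1 p "1-t"] t p by simp
  show "((1 - t) *\<^sub>R x + t *\<^sub>R y) powr p \<le> (1 - t) * x powr p + t * y powr p"
  proof (cases "x = 0")
    case True
    have "(t * y) powr p = t powr p * y powr p" using t xy by (simp add: powr_mult)
    also have "\<dots> \<le> t * y powr p" using tp by (simp add: mult_right_mono)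
    finally show ?thesis using True by simp
  next
    case x: False
    show ?thesis
    proof (cases "y = 0")
      case True
      have "((1-t) * x) powr p = (1-t) powr p * x powr p" using t xy by (simp add: powr_mult)
      also have "\<dots> \<le> (1-t) * x powr p" using tp' by (simp add: mult_right_mono)
      finally show ?thesis using True by simp
    next
      case False
      then show ?thesis using x xy t convex_onD[OF powr_convex[OF p], of t x y] by auto
    qed
  qed
qed

lemma abs_powr_avg:
  assumes p: "(p::real) \<ge> 1" and S: "finite S" "S \<noteq> {}"
  shows "\<bar>(\<Sum>i\<in>S. y i) / card S\<bar> powr p \<le> (\<Sum>i\<in>S. \<bar>y i\<bar> powr p) / card S"
proof -
  have c: "real (card S) > 0" using S by (simp add: card_gt_0_iff)
  have e: "(\<Sum>i\<in>S. (1 / card S) * \<bar>y i\<bar>) = (\<Sum>i\<in>S. \<bar>y i\<bar>) / card S"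
    by (simp add: sum_divide_distrib)
  have "\<bar>(\<Sum>i\<in>S. y i) / card S\<bar> = \<bar>(\<Sum>i\<in>S. y i)\<bar> / card S" by simp
  also have "\<dots> \<le> (\<Sum>i\<in>S. \<bar>y i\<bar>) / card S"
    using c by (intro divide_right_mono sum_abs) auto
  finally have "\<bar>(\<Sum>i\<in>S. y i) / card S\<bar> \<le> (\<Sum>i\<in>S. (1 / card S) * \<bar>y i\<bar>)"
    using e by simp
  then have "\<bar>(\<Sum>i\<in>S. y i) / card S\<bar> powr p \<le> (\<Sum>i\<in>S. (1 / card S) *\<^sub>R \<bar>y i\<bar>) powr p"
    using p by (intro powr_mono2) auto
  also have "\<dots> \<le> (\<Sum>i\<in>S. (1 / card S) * \<bar>y i\<bar> powr p)"
    using S c by (intro convex_on_sum[OF S powr_convex0[OF p]]) auto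
  also have "\<dots> = (\<Sum>i\<in>S. \<bar>y i\<bar> powr p) / card S"
    by (simp add: sum_divide_distrib)
  finally show ?thesis .
qed

lemma abs_powr_3:
  assumes p: "(p::real) \<ge> 1"
  shows "\<bar>a + b + c\<bar> powr p \<le> 3 powr (p - 1) * (\<bar>a\<bar> powr p + \<bar>b\<bar> powr p + \<bar>c\<bar> powr p)"
proof -
  let ?y = "\<lambda>i::nat. if i = 0 then a else if i = 1 then b else c"
  have s: "(\<Sum>i<3. ?y i) = a + b + c" by (simp add: numeral_3_eq_3)
  have s2: "(\<Sum>i<3. \<bar>?y i\<bar> powr p) = \<bar>a\<bar> powr p + \<bar>b\<bar> powr p + \<bar>c\<bar> powr p"
    by (simp add: numeral_3_eq_3)
  have "\<bar>(a + b + c) / 3\<bar> powr p \<le> (\<bar>a\<bar> powr p + \<bar>b\<bar> powr p + \<bar>c\<bar> powr p) / 3"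
  proof -
    have h: "\<bar>(\<Sum>i<3. ?y i) / real (card {..<3::nat})\<bar> powr p \<le> (\<Sum>i<3. \<bar>?y i\<bar> powr p) / real (card {..<3::nat})"
      by (rule abs_powr_avg[OF p]) (simp, metis empty_iff lessThan_iff zero_less_numeral)
    show ?thesis using h unfolding s s2 card_lessThan by simp
  qed
  then have "\<bar>a + b + c\<bar> powr p / 3 powr p \<le> (\<bar>a\<bar> powr p + \<bar>b\<bar> powr p + \<bar>c\<bar> powr p) / 3"
    by (simp add: powr_divide)
  then have "\<bar>a + b + c\<bar> powr p \<le> 3 powr p * ((\<bar>a\<bar> powr p + \<bar>b\<bar> powr p + \<bar>c\<bar> powr p) / 3)"
    by (simp add: divide_simps mult.commute)
  also have "\<dots> = 3 powr (p - 1) * (\<bar>a\<bar> powr p + \<bar>b\<bar> powr p + \<bar>c\<bar> powr p)"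
    by (simp add: powr_diff)
  finally show ?thesis .
qed

lemma abs_powr_bound:
  assumes p: "(p::real) \<ge> 1" and eta: "\<eta> > 0" and x: "\<bar>x\<bar> \<le> C"
  shows "\<bar>x\<bar> powr p \<le> \<eta> powr p + x\<^sup>2 * (\<eta> powr (p - 2) + C powr (p - 2))"
proof (cases "\<bar>x\<bar> \<le> \<eta>")
  case True
  then have "\<bar>x\<bar> powr p \<le> \<eta> powr p" using p by (intro powr_mono2) auto
  moreover have "0 \<le> x\<^sup>2 * (\<eta> powr (p - 2) + C powr (p - 2))" by simp
  ultimately show ?thesis by linarith
next
  case False
  then have xp: "\<bar>x\<bar> > 0" using eta by auto
  have eq: "\<bar>x\<bar> powr p = x\<^sup>2 * \<bar>x\<bar> powr (p - 2)"
  proof -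
    have "\<bar>x\<bar> powr p = \<bar>x\<bar> powr (2 + (p - 2))" by simp
    also have "\<dots> = \<bar>x\<bar> powr 2 * \<bar>x\<bar> powr (p - 2)" by (rule powr_add)
    also have "\<bar>x\<bar> powr 2 = x\<^sup>2" using xp by (simp add: powr_numeral)
    finally show ?thesis .
  qed
  have "\<bar>x\<bar> powr (p - 2) \<le> \<eta> powr (p - 2) + C powr (p - 2)"
  proof (cases "p \<ge> 2")
    case True
    then have "\<bar>x\<bar> powr (p - 2) \<le> C powr (p - 2)" using x by (intro powr_mono2) auto
    then show ?thesis by (smt (verit) powr_ge_zero)
  next
    case False
    then have "\<bar>x\<bar> powr (p - 2) \<le> \<eta> powr (p - 2)"
      using False xp eta \<open>\<not> \<bar>x\<bar> \<le> \<eta>\<close> by (intro powr_mono2') auto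
    then show ?thesis by (smt (verit) powr_ge_zero)
  qed
  then have "x\<^sup>2 * \<bar>x\<bar> powr (p - 2) \<le> x\<^sup>2 * (\<eta> powr (p - 2) + C powr (p - 2))"
    by (intro mult_left_mono) auto
  then show ?thesis using eq by (smt (verit) powr_ge_zero)
qed

lemma ennreal_SUP_tendsto0:
  fixes F :: "nat \<Rightarrow> 't \<Rightarrow> real"
  assumes "\<And>\<epsilon>. \<epsilon> > 0 \<Longrightarrow> \<exists>N. \<forall>n\<ge>N. \<forall>t\<in>I. F n t \<le> \<epsilon>"
  shows "(\<lambda>n. SUP t\<in>I. ennreal (F n t)) \<longlonglongrightarrow> 0"
proof (rule order_tendstoI)
  fix y :: ennreal assume "0 < y"
  then obtain z where z: "0 < z" "z < y" using dense by blast
  obtain r where r: "z = ennreal r" "r > 0"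
  proof (cases z)
    case (real r)
    then show ?thesis using that z by auto
  next
    case top
    then show ?thesis using z by auto
  qed
  obtain N where N: "\<forall>n\<ge>N. \<forall>t\<in>I. F n t \<le> r" using assms r by blast
  show "\<forall>\<^sub>F n in sequentially. (SUP t\<in>I. ennreal (F n t)) < y"
    unfolding eventually_sequentially
  proof (intro exI allI impI)
    fix n assume "N \<le> n"
    then have "(SUP t\<in>I. ennreal (F n t)) \<le> ennreal r"
      using N by (intro SUP_least ennreal_leI) auto
    then show "(SUP t\<in>I. ennreal (F n t)) < y" using z r by auto
  qed
qed simp

lemma ennreal_SUP_tendsto0_D:
  fixes F :: "nat \<Rightarrow> 't \<Rightarrow> real"
  assumes "(\<lambda>n. SUP t\<in>I. ennreal (F n t)) \<longlonglongrightarrow> 0" "\<epsilon> > 0"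
  shows "\<exists>N. \<forall>n\<ge>N. \<forall>t\<in>I. F n t < \<epsilon>"
proof -
  have "\<forall>\<^sub>F n in sequentially. (SUP t\<in>I. ennreal (F n t)) < ennreal \<epsilon>"
    using order_tendstoD(2)[OF assms(1)] assms(2) by simp
  then obtain N where N: "\<And>n. n \<ge> N \<Longrightarrow> (SUP t\<in>I. ennreal (F n t)) < ennreal \<epsilon>"
    unfolding eventually_sequentially by blast
  have "F n t < \<epsilon>" if "n \<ge> N" "t \<in> I" for n t
  proof -
    have "ennreal (F n t) < ennreal \<epsilon>"
      using N[OF that(1)] SUP_upper[OF that(2), of "\<lambda>t. ennreal (F n t)"] by auto
    then show ?thesis using assms(2) by (cases "F n t \<ge> 0") (auto simp: ennreal_less_iff)
  qed
  then show ?thesis by blast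
qed




definition mixF :: "(int ^ 'd) filter" where "mixF = filtercomap maxnorm at_top"

lemma eventually_mixF: "eventually P mixF \<longleftrightarrow> (\<exists>R. \<forall>v. maxnorm v \<ge> R \<longrightarrow> P v)"
  unfolding mixF_def by (rule eventually_filtercomap_at_top_linorder)

locale mixsys = prob_space M for M :: "'a measure" +
  fixes \<theta> :: "int ^ 'd \<Rightarrow> 'a \<Rightarrow> 'a"
  assumes dp: "dparam_group M \<theta>" and sm: "strongly_mixing M \<theta>"
begin

lemma th_basic: "\<theta> v \<in> M \<rightarrow>\<^sub>M M \<and> distr M M (\<theta> v) = M"
proof -
  from dp have "\<forall>k. \<theta> k \<in> M \<rightarrow>\<^sub>M M \<and> distr M M (\<theta> k) = M"
    unfolding dparam_group_def by (elim conjE)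
  then show ?thesis by (rule spec)
qed

lemma th_meas: "\<theta> v \<in> M \<rightarrow>\<^sub>M M"
  using th_basic by (rule conjunct1)

lemma th_distr: "distr M M (\<theta> v) = M"
  using th_basic by (rule conjunct2)

lemma th_space: "x \<in> space M \<Longrightarrow> \<theta> v x \<in> space M"
  by (rule measurable_space[OF th_meas])

lemma th_comp: assumes "x \<in> space M" shows "\<theta> a (\<theta> b x) = \<theta> (a + b) x"
proof -
  from dp have "\<forall>k l. \<forall>x\<in>space M. \<theta> k (\<theta> l x) = \<theta> (k + l) x"
    unfolding dparam_group_def by (elim conjE)
  then show ?thesis using assms by blast
qed

lemma th_int:
  fixes F :: "'a \<Rightarrow> real"
  assumes [measurable]: "F \<in> borel_measurable M"
  shows "integral\<^sup>L M (\<lambda>x. F (\<theta> v x)) = integral\<^sup>L M F"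
proof -
  have "integral\<^sup>L (distr M M (\<theta> v)) F = integral\<^sup>L M (\<lambda>x. F (\<theta> v x))"
    by (rule integral_distr[OF th_meas assms])
  then show ?thesis by (simp only: th_distr[of v])
qed

lemma th_integrable:
  fixes F :: "'a \<Rightarrow> real"
  assumes "integrable M F"
  shows "integrable M (\<lambda>x. F (\<theta> v x))"
proof -
  have m: "F \<in> borel_measurable M" using assms by auto
  have "integrable (distr M M (\<theta> v)) F \<longleftrightarrow> integrable M (\<lambda>x. F (\<theta> v x))"
    by (rule integrable_distr_eq[OF th_meas m])
  then show ?thesis using assms by (simp only: th_distr[of v])
qed

lemma bnd_integrable:
  assumes "f \<in> borel_measurable M" "\<And>x. x \<in> space M \<Longrightarrow> \<bar>f x\<bar> \<le> C"
  shows "integrable M (f :: 'a \<Rightarrow> real)"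
proof (rule integrable_const_bound[where B=C])
  show "AE x in M. norm (f x) \<le> C" using assms(2) by (intro AE_I2) simp
qed (rule assms(1))

lemma bnd_integral:
  assumes "f \<in> borel_measurable M" "\<And>x. x \<in> space M \<Longrightarrow> \<bar>f x\<bar> \<le> C"
  shows "\<bar>integral\<^sup>L M (f :: 'a \<Rightarrow> real)\<bar> \<le> C"
proof -
  have "\<bar>integral\<^sup>L M f\<bar> \<le> integral\<^sup>L M (\<lambda>x. \<bar>f x\<bar>)" by (rule integral_abs_bound)
  also have "\<dots> \<le> integral\<^sup>L M (\<lambda>x. C)"
  proof (rule integral_mono)
    show "integrable M (\<lambda>x. \<bar>f x\<bar>)" using bnd_integrable[OF assms] by (rule integrable_abs)
    show "integrable M (\<lambda>x. C)" by (rule integrable_const)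
    show "\<And>x. x \<in> space M \<Longrightarrow> \<bar>f x\<bar> \<le> C" by (rule assms(2))
  qed
  also have "integral\<^sup>L M (\<lambda>x. C) = C" using prob_space by (simp add: lebesgue_integral_const)
  finally show ?thesis .
qed

lemma mixing_tendsto:
  assumes "A \<in> sets M" "B \<in> sets M"
  shows "((\<lambda>v. measure M (A \<inter> (\<theta> v -` B \<inter> space M))) \<longlongrightarrow> measure M A * measure M B) mixF"
proof (rule tendstoI)
  fix e :: real assume "e > 0"
  then obtain R where R: "\<And>v. maxnorm v > R \<Longrightarrow>
        \<bar>measure M (A \<inter> (\<theta> v -` B \<inter> space M)) - measure M A * measure M B\<bar> < e"
    using sm assms unfolding strongly_mixing_def by blast
  show "\<forall>\<^sub>F v in mixF. dist (measure M (A \<inter> (\<theta> v -` B \<inter> space M))) (measure M A * measure M B) < e"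
    unfolding eventually_mixF
  proof (rule exI[of _ "R + 1"], intro allI impI)
    fix v :: "int ^ 'd" assume "R + 1 \<le> maxnorm v"
    then have "maxnorm v > R" by simp
    from R[OF this] show "dist (measure M (A \<inter> (\<theta> v -` B \<inter> space M))) (measure M A * measure M B) < e"
      by (simp add: dist_real_def)
  qed
qed

end



lemma prod_approx:
  fixes ga gb sa sb d B :: real
  assumes "\<bar>ga - sa\<bar> \<le> d" "\<bar>gb - sb\<bar> \<le> d" "\<bar>gb\<bar> \<le> B" "\<bar>sa\<bar> \<le> B + d"
  shows "\<bar>ga * gb - sa * sb\<bar> \<le> d * (2 * B + d)"
proof -
  have "ga * gb - sa * sb = (ga - sa) * gb + sa * (gb - sb)" by (simp add: algebra_simps)
  then have "\<bar>ga * gb - sa * sb\<bar> \<le> \<bar>ga - sa\<bar> * \<bar>gb\<bar> + \<bar>sa\<bar> * \<bar>gb - sb\<bar>"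
    by (simp add: abs_mult[symmetric] abs_triangle_ineq)
  also have "\<dots> \<le> d * B + (B + d) * d"
    using assms by (intro add_mono mult_mono) auto
  finally show ?thesis by (simp add: algebra_simps)
qed

context mixsys begin

lemma simple_corr:
  fixes c :: "'j \<Rightarrow> real"
  assumes J: "finite J" and A: "\<And>j. j \<in> J \<Longrightarrow> A j \<in> sets M"
  shows "((\<lambda>v. \<integral>x. (\<Sum>j\<in>J. c j * indicator (A j) x) * (\<Sum>j\<in>J. c j * indicator (A j) (\<theta> v x)) \<partial>M)
           \<longlongrightarrow> (\<integral>x. (\<Sum>j\<in>J. c j * indicator (A j) x) \<partial>M)\<^sup>2) mixF"
proof -
  have pre: "\<theta> v -` A l \<inter> space M \<in> sets M" if "l \<in> J" for v l
    using A[OF that] th_meas by (rule measurable_sets[rotated])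
  have eq1: "(\<integral>x. (\<Sum>j\<in>J. c j * indicator (A j) x) * (\<Sum>j\<in>J. c j * indicator (A j) (\<theta> v x)) \<partial>M)
     = (\<Sum>j\<in>J. \<Sum>l\<in>J. c j * c l * measure M (A j \<inter> (\<theta> v -` A l \<inter> space M)))" for v
  proof -
    have "(\<integral>x. (\<Sum>j\<in>J. c j * indicator (A j) x) * (\<Sum>j\<in>J. c j * indicator (A j) (\<theta> v x)) \<partial>M)
      = (\<integral>x. (\<Sum>j\<in>J. \<Sum>l\<in>J. c j * c l * indicator (A j \<inter> (\<theta> v -` A l \<inter> space M)) x) \<partial>M)"
    proof (rule Bochner_Integration.integral_cong[OF refl])
      fix x assume x: "x \<in> space M"
      have "(\<Sum>j\<in>J. c j * indicator (A j) x) * (\<Sum>j\<in>J. c j * indicator (A j) (\<theta> v x))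
          = (\<Sum>j\<in>J. \<Sum>l\<in>J. (c j * indicator (A j) x) * (c l * indicator (A l) (\<theta> v x)))"
        by (rule sum_product)
      also have "\<dots> = (\<Sum>j\<in>J. \<Sum>l\<in>J. c j * c l * indicator (A j \<inter> (\<theta> v -` A l \<inter> space M)) x)"
        using x by (intro sum.cong refl) (auto simp: indicator_def)
      finally show "(\<Sum>j\<in>J. c j * indicator (A j) x) * (\<Sum>j\<in>J. c j * indicator (A j) (\<theta> v x))
          = (\<Sum>j\<in>J. \<Sum>l\<in>J. c j * c l * indicator (A j \<inter> (\<theta> v -` A l \<inter> space M)) x)" .
    qed
    also have "\<dots> = (\<Sum>j\<in>J. \<Sum>l\<in>J. c j * c l * measure M (A j \<inter> (\<theta> v -` A l \<inter> space M)))"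
    proof -
      have s: "A j \<inter> (\<theta> v -` A l \<inter> space M) \<in> sets M" if "j \<in> J" "l \<in> J" for j l
        using A pre that by blast
      have ii: "integrable M (indicator (A j \<inter> (\<theta> v -` A l \<inter> space M)) :: 'a \<Rightarrow> real)"
        if "j \<in> J" "l \<in> J" for j l
        using s[OF that] by (intro integrable_real_indicator) (auto simp: less_top[symmetric])
      have "(\<integral>x. (\<Sum>j\<in>J. \<Sum>l\<in>J. c j * c l * indicator (A j \<inter> (\<theta> v -` A l \<inter> space M)) x) \<partial>M)
         = (\<Sum>j\<in>J. \<integral>x. (\<Sum>l\<in>J. c j * c l * indicator (A j \<inter> (\<theta> v -` A l \<inter> space M)) x) \<partial>M)"
        by (rule Bochner_Integration.integral_sum) (use ii in auto)
      also have "\<dots> = (\<Sum>j\<in>J. \<Sum>l\<in>J. \<integral>x. c j * c l * indicator (A j \<inter> (\<theta> v -` A l \<inter> space M)) x \<partial>M)"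
        by (intro sum.cong refl Bochner_Integration.integral_sum) (use ii in auto)
      also have "\<dots> = (\<Sum>j\<in>J. \<Sum>l\<in>J. c j * c l * measure M (A j \<inter> (\<theta> v -` A l \<inter> space M)))"
        by (intro sum.cong refl) (simp add: Int_assoc)
      finally show ?thesis .
    qed
    finally show ?thesis .
  qed
  have eq2: "(\<integral>x. (\<Sum>j\<in>J. c j * indicator (A j) x) \<partial>M)\<^sup>2
      = (\<Sum>j\<in>J. \<Sum>l\<in>J. c j * c l * (measure M (A j) * measure M (A l)))"
  proof -
    have "(\<integral>x. (\<Sum>j\<in>J. c j * indicator (A j) x) \<partial>M) = (\<Sum>j\<in>J. c j * measure M (A j))"
      using A by (subst Bochner_Integration.integral_sum) (auto simp: Int_absorb2 sets.sets_into_space less_top[symmetric] intro!: integrable_real_indicator)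
    then show ?thesis
      by (simp add: power2_eq_square sum_product algebra_simps)
  qed
  show ?thesis
    unfolding eq1 eq2
    using A by (intro tendsto_sum tendsto_mult_left mixing_tendsto) auto
qed

lemma bounded_corr:
  fixes g :: "'a \<Rightarrow> real"
  assumes gm[measurable]: "g \<in> borel_measurable M" and gb: "\<And>x. x \<in> space M \<Longrightarrow> \<bar>g x\<bar> \<le> B"
  shows "((\<lambda>v. \<integral>x. g x * g (\<theta> v x) \<partial>M) \<longlongrightarrow> (\<integral>x. g x \<partial>M)\<^sup>2) mixF"
proof (rule tendstoI)
  fix e :: real assume e: "e > 0"
  note th_meas[measurable]
  define B' where "B' = \<bar>B\<bar>"
  have gb': "\<bar>g x\<bar> \<le> B'" if "x \<in> space M" for x using gb[OF that] by (simp add: B'_def)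
  have B'0: "B' \<ge> 0" by (simp add: B'_def)
  define \<delta> where "\<delta> = min 1 (e / (8 * (2*B' + 1)))"
  have d0: "\<delta> > 0" "\<delta> \<le> 1" using e B'0 by (auto simp: \<delta>_def)
  have dsmall: "2 * (\<delta> * (2*B' + \<delta>)) \<le> e/2"
  proof -
    have "\<delta> * (2*B' + \<delta>) \<le> \<delta> * (2*B' + 1)" using d0 by (intro mult_left_mono) auto
    also have "\<dots> \<le> (e / (8 * (2*B' + 1))) * (2*B' + 1)"
      using B'0 by (intro mult_right_mono) (auto simp: \<delta>_def)
    also have "\<dots> = e / 8" using B'0 by (simp add: field_simps)
    finally show ?thesis using e by simp
  qed
  define q where "q x = \<lfloor>g x / \<delta>\<rfloor>" for x
  define K where "K = \<lceil>B' / \<delta>\<rceil> + 1"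
  define J where "J = {-K..K}"
  define A where "A j = {x\<in>space M. q x = j}" for j
  define s where "s x = (\<Sum>j\<in>J. (\<delta> * of_int j) * indicator (A j) x)" for x
  have finJ: "finite J" by (simp add: J_def)
  have Asets[measurable]: "A j \<in> sets M" for j unfolding A_def q_def by measurable
  have qJ: "q x \<in> J" if x: "x \<in> space M" for x
  proof -
    have "\<bar>g x / \<delta>\<bar> \<le> B' / \<delta>" using gb'[OF x] d0 by (simp add: divide_right_mono)
    then have h: "- (B' / \<delta>) \<le> g x / \<delta>" "g x / \<delta> \<le> B' / \<delta>" by linarith+
    have "real_of_int (q x) \<le> g x / \<delta>" unfolding q_def by (rule of_int_floor_le)
    moreover have "g x / \<delta> < real_of_int (q x) + 1" unfolding q_def by (rule real_of_int_floor_add_one_gt)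
    moreover have "B' / \<delta> \<le> real_of_int \<lceil>B' / \<delta>\<rceil>" by (rule le_of_int_ceiling)
    ultimately have "real_of_int (q x) \<le> real_of_int K" "real_of_int (- K) \<le> real_of_int (q x)"
      using h unfolding K_def by linarith+
    then show ?thesis unfolding J_def by (simp only: of_int_le_iff atLeastAtMost_iff)
  qed
  have sx: "s x = \<delta> * q x" if x: "x \<in> space M" for x
  proof -
    have "s x = (\<Sum>j\<in>J. if j = q x then \<delta> * of_int j else 0)"
      unfolding s_def A_def using x by (intro sum.cong) (auto simp: indicator_def)
    also have "\<dots> = \<delta> * q x" using qJ[OF x] finJ by (simp add: sum.delta)
    finally show ?thesis .
  qed
  have approx: "\<bar>g x - s x\<bar> \<le> \<delta>" if x: "x \<in> space M" for x
  proof -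
    have "real_of_int (q x) \<le> g x / \<delta>" unfolding q_def by (rule of_int_floor_le)
    moreover have "g x / \<delta> < real_of_int (q x) + 1" unfolding q_def by (rule real_of_int_floor_add_one_gt)
    ultimately have "\<delta> * real_of_int (q x) \<le> g x" "g x < \<delta> * (real_of_int (q x) + 1)"
      using d0 by (simp_all add: field_simps)
    then show ?thesis using sx[OF x] by (simp add: algebra_simps)
  qed
  have sbnd: "\<bar>s x\<bar> \<le> B' + \<delta>" if x: "x \<in> space M" for x
    using approx[OF x] gb'[OF x] by linarith
  have sm[measurable]: "s \<in> borel_measurable M" unfolding s_def by measurable
  have lim: "((\<lambda>v. \<integral>x. s x * s (\<theta> v x) \<partial>M) \<longlongrightarrow> (\<integral>x. s x \<partial>M)\<^sup>2) mixF"
    unfolding s_def by (rule simple_corr[OF finJ Asets])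
  have ev: "\<forall>\<^sub>F v in mixF. dist (\<integral>x. s x * s (\<theta> v x) \<partial>M) ((\<integral>x. s x \<partial>M)\<^sup>2) < e/2"
    using tendstoD[OF lim, of "e/2"] e by simp
  show "\<forall>\<^sub>F v in mixF. dist (\<integral>x. g x * g (\<theta> v x) \<partial>M) ((\<integral>x. g x \<partial>M)\<^sup>2) < e"
  proof (rule eventually_mono[OF ev])
    fix v assume v: "dist (\<integral>x. s x * s (\<theta> v x) \<partial>M) ((\<integral>x. s x \<partial>M)\<^sup>2) < e/2"
    have ig: "integrable M (\<lambda>x. g x * g (\<theta> v x))"
      by (rule bnd_integrable[where C="B' * B'"]) (use B'0 d0 in \<open>auto simp: abs_mult intro!: mult_mono gb' th_space\<close>)
    have iss: "integrable M (\<lambda>x. s x * s (\<theta> v x))"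
      by (rule bnd_integrable[where C="(B' + \<delta>) * (B' + \<delta>)"]) (use B'0 d0 in \<open>auto simp: abs_mult intro!: mult_mono sbnd th_space\<close>)
    have i1: "\<bar>(\<integral>x. g x * g (\<theta> v x) \<partial>M) - (\<integral>x. s x * s (\<theta> v x) \<partial>M)\<bar> \<le> \<delta> * (2 * B' + \<delta>)"
    proof -
      have "(\<integral>x. g x * g (\<theta> v x) \<partial>M) - (\<integral>x. s x * s (\<theta> v x) \<partial>M)
          = (\<integral>x. g x * g (\<theta> v x) - s x * s (\<theta> v x) \<partial>M)"
        using ig iss by (rule Bochner_Integration.integral_diff[symmetric])
      also have "\<bar>\<dots>\<bar> \<le> \<delta> * (2 * B' + \<delta>)"
        by (rule bnd_integral) (auto intro!: prod_approx approx gb' sbnd th_space)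
      finally show ?thesis .
    qed
    have ga: "\<bar>(\<integral>x. g x \<partial>M) - (\<integral>x. s x \<partial>M)\<bar> \<le> \<delta>"
    proof -
      have "(\<integral>x. g x \<partial>M) - (\<integral>x. s x \<partial>M) = (\<integral>x. g x - s x \<partial>M)"
      proof (rule Bochner_Integration.integral_diff[symmetric])
        show "integrable M g" by (rule bnd_integrable[where C="B'"]) (auto intro: gb')
        show "integrable M s" by (rule bnd_integrable[where C="B' + \<delta>"]) (auto intro: sbnd)
      qed
      also have "\<bar>\<dots>\<bar> \<le> \<delta>" by (rule bnd_integral) (auto intro!: approx)
      finally show ?thesis .
    qed
    have gI: "\<bar>\<integral>x. g x \<partial>M\<bar> \<le> B'" by (rule bnd_integral) (auto intro!: gb')
    have sI: "\<bar>\<integral>x. s x \<partial>M\<bar> \<le> B' + \<delta>" by (rule bnd_integral) (auto intro!: sbnd)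
    have i2: "\<bar>(\<integral>x. g x \<partial>M) * (\<integral>x. g x \<partial>M) - (\<integral>x. s x \<partial>M) * (\<integral>x. s x \<partial>M)\<bar> \<le> \<delta> * (2 * B' + \<delta>)"
      by (rule prod_approx[OF ga ga gI sI])
    show "dist (\<integral>x. g x * g (\<theta> v x) \<partial>M) ((\<integral>x. g x \<partial>M)\<^sup>2) < e"
      using i1 i2 v dsmall unfolding dist_real_def power2_eq_square by linarith
  qed
qed

end



lemma count_bound:
  fixes a :: "nat \<Rightarrow> int ^ 'd" and R :: int
  assumes R: "R \<ge> 0"
  shows "card ({..<n} \<times> {..<n} \<inter> {(i,j). maxnorm (a j - a i) \<le> R})
     \<le> 2 * n + card {(i, j). i \<in> {1..n} \<and> j \<in> {1..n} \<and> maxnorm (a i - a j) \<le> int (nat R)}"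
proof -
  let ?S = "{(i, j). i \<in> {1..n} \<and> j \<in> {1..n} \<and> maxnorm (a i - a j) \<le> int (nat R)}"
  have finS: "finite ?S"
    by (rule finite_subset[of _ "{1..n} \<times> {1..n}"]) auto
  have sub: "{..<n} \<times> {..<n} \<inter> {(i,j). maxnorm (a j - a i) \<le> R} \<subseteq> ({0} \<times> {..<n} \<union> {..<n} \<times> {0}) \<union> ?S"
  proof
    fix x assume x: "x \<in> {..<n} \<times> {..<n} \<inter> {(i,j). maxnorm (a j - a i) \<le> R}"
    obtain i j where ij: "x = (i, j)" by (cases x)
    have m: "maxnorm (a i - a j) = maxnorm (a j - a i)"
      using maxnorm_minus[of "a j - a i"] by simp
    show "x \<in> ({0} \<times> {..<n} \<union> {..<n} \<times> {0}) \<union> ?S"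
      using x R m unfolding ij by auto
  qed
  have "card ({..<n} \<times> {..<n} \<inter> {(i,j). maxnorm (a j - a i) \<le> R})
      \<le> card (({0} \<times> {..<n} \<union> {..<n} \<times> {0}) \<union> ?S)"
    by (rule card_mono[OF _ sub]) (use finS in auto)
  also have "\<dots> \<le> card ({0} \<times> {..<n} \<union> {..<n} \<times> {0}) + card ?S" by (rule card_Un_le)
  also have "card ({0} \<times> {..<n} \<union> {..<n} \<times> {0}) \<le> card ({0::nat} \<times> {..<n}) + card ({..<n} \<times> {0::nat})"
    by (rule card_Un_le)
  finally show ?thesis by (simp add: card_cartesian_product)
qed

context mixsys begin

lemma var_formula:
  fixes h :: "'a \<Rightarrow> real" and a :: "nat \<Rightarrow> int ^ 'd"
  assumes hm[measurable]: "h \<in> borel_measurable M" and hb: "\<And>x. x \<in> space M \<Longrightarrow> \<bar>h x\<bar> \<le> C"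
  shows "(\<integral>x. ((\<Sum>i<n. h (\<theta> (a i) x)) / n)\<^sup>2 \<partial>M)
      = (\<Sum>i<n. \<Sum>j<n. \<integral>y. h y * h (\<theta> (a j - a i) y) \<partial>M) / (real n)\<^sup>2"
proof -
  note th_meas[measurable]
  have int: "integrable M (\<lambda>x. h (\<theta> (a i) x) * h (\<theta> (a j) x))" for i j
    by (rule bnd_integrable[where C="C * C"])
       (auto simp: abs_mult intro!: mult_mono hb th_space order_trans[OF abs_ge_zero hb])
  have "(\<integral>x. ((\<Sum>i<n. h (\<theta> (a i) x)) / n)\<^sup>2 \<partial>M)
      = (\<integral>x. (\<Sum>i<n. \<Sum>j<n. h (\<theta> (a i) x) * h (\<theta> (a j) x)) / (real n)\<^sup>2 \<partial>M)"
    by (simp add: power_divide power2_eq_square sum_product)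
  also have "\<dots> = (\<integral>x. (\<Sum>i<n. \<Sum>j<n. h (\<theta> (a i) x) * h (\<theta> (a j) x)) \<partial>M) / (real n)\<^sup>2"
    by (rule integral_divide_zero)
  also have "(\<integral>x. (\<Sum>i<n. \<Sum>j<n. h (\<theta> (a i) x) * h (\<theta> (a j) x)) \<partial>M)
      = (\<Sum>i<n. \<Sum>j<n. \<integral>x. h (\<theta> (a i) x) * h (\<theta> (a j) x) \<partial>M)"
    using int by (simp add: Bochner_Integration.integral_sum integrable_sum)
  also have "\<dots> = (\<Sum>i<n. \<Sum>j<n. \<integral>y. h y * h (\<theta> (a j - a i) y) \<partial>M)"
  proof (intro sum.cong refl)
    fix i j
    have "(\<integral>x. h (\<theta> (a i) x) * h (\<theta> (a j) x) \<partial>M)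
        = (\<integral>x. (\<lambda>y. h y * h (\<theta> (a j - a i) y)) (\<theta> (a i) x) \<partial>M)"
      by (rule Bochner_Integration.integral_cong[OF refl]) (simp add: th_comp)
    also have "\<dots> = (\<integral>y. h y * h (\<theta> (a j - a i) y) \<partial>M)"
      by (rule th_int) measurable
    finally show "(\<integral>x. h (\<theta> (a i) x) * h (\<theta> (a j) x) \<partial>M) = (\<integral>y. h y * h (\<theta> (a j - a i) y) \<partial>M)" .
  qed
  finally show ?thesis .
qed

lemma avg_L2:
  fixes h :: "'a \<Rightarrow> real"
  assumes hm[measurable]: "h \<in> borel_measurable M" and hb: "\<And>x. x \<in> space M \<Longrightarrow> \<bar>h x\<bar> \<le> C"
    and h0: "(\<integral>x. h x \<partial>M) = 0" and e: "e > 0"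
  obtains R :: int where "R \<ge> 0" and
    "\<And>n a. (\<integral>x. ((\<Sum>i<n. h (\<theta> (a i) x)) / n)\<^sup>2 \<partial>M)
       \<le> (C\<^sup>2 * real (card ({..<n} \<times> {..<n} \<inter> {(i,j). maxnorm (a j - a i) \<le> R})) + e * (real n)\<^sup>2) / (real n)\<^sup>2"
proof -
  note th_meas[measurable]
  have C0: "C \<ge> 0"
  proof -
    obtain x where "x \<in> space M" using not_empty by blast
    then show ?thesis using hb[of x] by linarith
  qed
  define c where "c v = (\<integral>y. h y * h (\<theta> v y) \<partial>M)" for v
  have lim: "(c \<longlongrightarrow> 0) mixF"
    using bounded_corr[OF hm hb] h0 unfolding c_def by simp
  obtain R0 where R0: "\<And>v. maxnorm v \<ge> R0 \<Longrightarrow> dist (c v) 0 < e"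
    using tendstoD[OF lim e] unfolding eventually_mixF by blast
  define R where "R = max 0 R0"
  have cb: "\<bar>c v\<bar> \<le> C\<^sup>2 * of_bool (maxnorm v \<le> R) + e" for v
  proof (cases "maxnorm v \<le> R")
    case True
    have "\<bar>c v\<bar> \<le> C * C" unfolding c_def
      by (rule bnd_integral) (use C0 in \<open>auto simp: abs_mult intro!: mult_mono hb th_space\<close>)
    then show ?thesis using True e by (simp add: power2_eq_square)
  next
    case False
    then have "maxnorm v \<ge> R0" by (simp add: R_def)
    then show ?thesis using R0[of v] False by (simp add: dist_real_def)
  qed
  have main: "(\<integral>x. ((\<Sum>i<n. h (\<theta> (a i) x)) / n)\<^sup>2 \<partial>M)
       \<le> (C\<^sup>2 * real (card ({..<n} \<times> {..<n} \<inter> {(i,j). maxnorm (a j - a i) \<le> R})) + e * (real n)\<^sup>2) / (real n)\<^sup>2"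
    for n a
  proof -
    have "(\<Sum>i<n. \<Sum>j<n. c (a j - a i)) \<le> (\<Sum>i<n. \<Sum>j<n. C\<^sup>2 * of_bool (maxnorm (a j - a i) \<le> R) + e)"
      by (intro sum_mono) (use cb in \<open>smt (verit)\<close>)
    also have "\<dots> = (\<Sum>(i,j)\<in>{..<n} \<times> {..<n}. C\<^sup>2 * of_bool (maxnorm (a j - a i) \<le> R) + e)"
      by (rule sum.cartesian_product)
    also have "\<dots> = C\<^sup>2 * (\<Sum>(i,j)\<in>{..<n} \<times> {..<n}. of_bool (maxnorm (a j - a i) \<le> R)) + e * (real n)\<^sup>2"
      by (simp add: sum.distrib sum_distrib_left case_prod_unfold card_cartesian_product power2_eq_square)
    finally have S1: "(\<Sum>i<n. \<Sum>j<n. c (a j - a i))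
       \<le> C\<^sup>2 * (\<Sum>(i,j)\<in>{..<n} \<times> {..<n}. of_bool (maxnorm (a j - a i) \<le> R)) + e * (real n)\<^sup>2" .
    have eq: "(\<Sum>(i,j)\<in>{..<n} \<times> {..<n}. of_bool (maxnorm (a j - a i) \<le> R) :: real)
        = real (card ({..<n} \<times> {..<n} \<inter> {(i,j). maxnorm (a j - a i) \<le> R}))"
      by (simp add: case_prod_unfold)
    have S: "(\<Sum>i<n. \<Sum>j<n. c (a j - a i))
       \<le> C\<^sup>2 * real (card ({..<n} \<times> {..<n} \<inter> {(i,j). maxnorm (a j - a i) \<le> R})) + e * (real n)\<^sup>2"
      using S1 unfolding eq .
    have V: "(\<integral>x. ((\<Sum>i<n. h (\<theta> (a i) x)) / n)\<^sup>2 \<partial>M) = (\<Sum>i<n. \<Sum>j<n. c (a j - a i)) / (real n)\<^sup>2"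
      unfolding c_def by (rule var_formula[OF hm hb])
    show ?thesis
      unfolding V by (rule divide_right_mono[OF S]) simp
  qed
  show ?thesis by (rule that[of R]) (simp add: R_def, rule main)
qed

end



context mixsys begin

lemma bounded_case:
  fixes g :: "'a \<Rightarrow> real" and k :: "'t \<Rightarrow> nat \<Rightarrow> int ^ 'd"
  assumes gm[measurable]: "g \<in> borel_measurable M" and gb: "\<And>x. x \<in> space M \<Longrightarrow> \<bar>g x\<bar> \<le> B"
    and H: "\<And>m::nat. (\<lambda>n::nat. SUP t\<in>I. ennreal (real (card {(i, j). i \<in> {1..n} \<and> j \<in> {1..n} \<and>
              maxnorm (k t i - k t j) \<le> int m}) / (real n)\<^sup>2)) \<longlonglongrightarrow> 0"
    and p: "1 \<le> p" and tau: "\<tau> > 0"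
  shows "\<exists>N. \<forall>n\<ge>N. \<forall>t\<in>I. (\<integral>x. \<bar>(\<Sum>i<n. g (\<theta> (k t i) x)) / real n - (\<integral>y. g y \<partial>M)\<bar> powr p \<partial>M) \<le> \<tau>"
proof -
  note th_meas[measurable]
  define B' where "B' = \<bar>B\<bar>"
  have gb': "\<bar>g x\<bar> \<le> B'" if "x \<in> space M" for x using gb[OF that] by (simp add: B'_def)
  have B'0: "B' \<ge> 0" by (simp add: B'_def)
  define mu where "mu = (\<integral>y. g y \<partial>M)"
  have mub: "\<bar>mu\<bar> \<le> B'" unfolding mu_def by (rule bnd_integral) (auto intro: gb')
  define C where "C = 2 * B'"
  have C0: "C \<ge> 0" using B'0 by (simp add: C_def)
  define h where "h x = g x - mu" for x
  have hm[measurable]: "h \<in> borel_measurable M" unfolding h_def by measurable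
  have hb: "\<bar>h x\<bar> \<le> C" if "x \<in> space M" for x
    using gb'[OF that] mub unfolding h_def C_def by linarith
  have gint: "integrable M g" by (rule bnd_integrable[where C=B']) (auto intro: gb')
  have h0: "(\<integral>x. h x \<partial>M) = 0"
    unfolding h_def using gint by (simp add: Bochner_Integration.integral_diff prob_space mu_def)
  define \<eta> where "\<eta> = (\<tau> / 2) powr (1 / p)"
  have eta0: "\<eta> > 0" using tau by (simp add: \<eta>_def)
  have etap: "\<eta> powr p = \<tau> / 2" using tau p by (simp add: \<eta>_def powr_powr)
  define Cp where "Cp = \<eta> powr (p - 2) + C powr (p - 2)"
  have Cp0: "Cp \<ge> 0" by (simp add: Cp_def)
  define D where "D = Cp * C\<^sup>2 + Cp + 1"
  have D0: "D > 0" using Cp0 C0 by (simp add: D_def add_nonneg_pos)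
  define \<epsilon> where "\<epsilon> = \<tau> / (8 * D)"
  have eps0: "\<epsilon> > 0" using tau D0 by (simp add: \<epsilon>_def)
  obtain R where R0: "R \<ge> 0" and RL2: "\<And>n a. (\<integral>x. ((\<Sum>i<n. h (\<theta> (a i) x)) / n)\<^sup>2 \<partial>M)
       \<le> (C\<^sup>2 * real (card ({..<n} \<times> {..<n} \<inter> {(i,j). maxnorm (a j - a i) \<le> R})) + \<epsilon> * (real n)\<^sup>2) / (real n)\<^sup>2"
    using avg_L2[OF hm hb h0 eps0] by blast
  obtain N1 where N1: "\<And>n t. n \<ge> N1 \<Longrightarrow> t \<in> I \<Longrightarrow>
      real (card {(i, j). i \<in> {1..n} \<and> j \<in> {1..n} \<and> maxnorm (k t i - k t j) \<le> int (nat R)}) / (real n)\<^sup>2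
        < \<tau> / (16 * D)"
    using ennreal_SUP_tendsto0_D[OF H[of "nat R"], of "\<tau> / (16 * D)"] tau D0 by auto
  define N2 :: nat where "N2 = nat \<lceil>32 * D / \<tau>\<rceil> + 1"
  define N where "N = max (max N1 N2) 1"
  have bound: "(\<integral>x. \<bar>(\<Sum>i<n. g (\<theta> (k t i) x)) / real n - mu\<bar> powr p \<partial>M) \<le> \<tau>"
    if n: "n \<ge> N" and t: "t \<in> I" for n t
  proof -
    have n0: "n > 0" using n by (simp add: N_def)
    have nN1: "n \<ge> N1" and nN2: "n \<ge> N2" using n by (auto simp: N_def)
    define X where "X x = (\<Sum>i<n. h (\<theta> (k t i) x)) / real n" for x
    have Xeq: "(\<Sum>i<n. g (\<theta> (k t i) x)) / real n - mu = X x" for x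
      unfolding X_def h_def using n0 by (simp add: sum_subtractf field_simps)
    have Xm[measurable]: "X \<in> borel_measurable M" unfolding X_def by measurable
    have Xb: "\<bar>X x\<bar> \<le> C" if x: "x \<in> space M" for x
    proof -
      have "\<bar>\<Sum>i<n. h (\<theta> (k t i) x)\<bar> \<le> (\<Sum>i<n. \<bar>h (\<theta> (k t i) x)\<bar>)" by (rule sum_abs)
      also have "\<dots> \<le> (\<Sum>i<n. C)" by (intro sum_mono hb th_space x)
      finally show ?thesis using n0 unfolding X_def by (simp add: divide_simps mult.commute)
    qed
    have pw: "\<bar>X x\<bar> powr p \<le> \<eta> powr p + Cp * (X x)\<^sup>2" if "x \<in> space M" for x
      using abs_powr_bound[OF p eta0 Xb[OF that]] unfolding Cp_def by (simp add: mult.commute)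
    have X2int: "integrable M (\<lambda>x. (X x)\<^sup>2)"
    proof (rule bnd_integrable[where C="C\<^sup>2"])
      fix x assume x: "x \<in> space M"
      have "\<bar>X x\<bar>\<^sup>2 \<le> C\<^sup>2" by (rule power_mono[OF Xb[OF x]]) simp
      then show "\<bar>(X x)\<^sup>2\<bar> \<le> C\<^sup>2" by simp
    qed measurable
    have I1: "(\<integral>x. \<bar>X x\<bar> powr p \<partial>M) \<le> (\<integral>x. \<eta> powr p + Cp * (X x)\<^sup>2 \<partial>M)"
      by (rule integral_mono') (use pw X2int Cp0 in auto)
    also have "\<dots> = \<eta> powr p + Cp * (\<integral>x. (X x)\<^sup>2 \<partial>M)"
      using X2int by (simp add: Bochner_Integration.integral_add prob_space)
    finally have I2: "(\<integral>x. \<bar>X x\<bar> powr p \<partial>M) \<le> \<tau> / 2 + Cp * (\<integral>x. (X x)\<^sup>2 \<partial>M)"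
      using etap by simp
    define cR where "cR = real (card ({..<n} \<times> {..<n} \<inter> {(i,j). maxnorm (k t j - k t i) \<le> R}))"
    define c' where "c' = real (card {(i, j). i \<in> {1..n} \<and> j \<in> {1..n} \<and> maxnorm (k t i - k t j) \<le> int (nat R)})"
    have cR: "cR \<le> 2 * real n + c'"
      using count_bound[OF R0, of n "k t"] unfolding cR_def c'_def by linarith
    have c'b: "c' / (real n)\<^sup>2 < \<tau> / (16 * D)" using N1[OF nN1 t] unfolding c'_def .
    have nb: "2 / real n \<le> \<tau> / (16 * D)"
    proof -
      have "32 * D / \<tau> \<le> real_of_int \<lceil>32 * D / \<tau>\<rceil>" by (rule le_of_int_ceiling)
      also have "\<dots> \<le> real n" using nN2 unfolding N2_def by linarith
      finally have "32 * D / \<tau> \<le> real n" .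
      then have "32 * D \<le> real n * \<tau>" using tau by (simp add: divide_simps)
      then show ?thesis using n0 tau D0 by (simp add: divide_simps mult.commute)
    qed
    have X2: "(\<integral>x. (X x)\<^sup>2 \<partial>M) \<le> C\<^sup>2 * (cR / (real n)\<^sup>2) + \<epsilon>"
      using RL2[of "k t" n] n0 unfolding X_def cR_def by (simp add: divide_simps)
    have cRn: "cR / (real n)\<^sup>2 \<le> 2 / real n + c' / (real n)\<^sup>2"
    proof -
      have "cR / (real n)\<^sup>2 \<le> (2 * real n + c') / (real n)\<^sup>2" using cR by (simp add: divide_right_mono)
      also have "\<dots> = 2 / real n + c' / (real n)\<^sup>2" using n0 by (simp add: field_simps power2_eq_square)
      finally show ?thesis .
    qed
    have "Cp * (\<integral>x. (X x)\<^sup>2 \<partial>M) \<le> Cp * (C\<^sup>2 * (2 / real n + c' / (real n)\<^sup>2) + \<epsilon>)"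
      using X2 cRn Cp0 by (smt (verit) mult_left_mono zero_le_power2)
    also have "\<dots> = (Cp * C\<^sup>2) * (2 / real n + c' / (real n)\<^sup>2) + Cp * \<epsilon>" by (simp add: algebra_simps)
    also have "\<dots> \<le> D * (\<tau> / (8 * D)) + D * \<epsilon>"
    proof (intro add_mono mult_mono)
      show "Cp * C\<^sup>2 \<le> D" using Cp0 by (simp add: D_def)
      show "2 / real n + c' / (real n)\<^sup>2 \<le> \<tau> / (8 * D)" using nb c'b by simp
      show "Cp \<le> D" using Cp0 C0 by (simp add: D_def)
    qed (use Cp0 C0 eps0 D0 tau in \<open>auto simp: c'_def\<close>)
    also have "\<dots> = \<tau> / 4" using D0 by (simp add: \<epsilon>_def)
    finally have "Cp * (\<integral>x. (X x)\<^sup>2 \<partial>M) \<le> \<tau> / 4" .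
    then show ?thesis unfolding Xeq using I2 tau by linarith
  qed
  show ?thesis unfolding mu_def[symmetric] using bound by blast
qed

end



context mixsys begin

lemma main_result:
  fixes f :: "'a \<Rightarrow> real" and k :: "'t \<Rightarrow> nat \<Rightarrow> int ^ 'd"
  assumes H: "\<And>m::nat. (\<lambda>n::nat. SUP t\<in>I. ennreal (real (card {(i, j). i \<in> {1..n} \<and> j \<in> {1..n} \<and>
              maxnorm (k t i - k t j) \<le> int m}) / (real n)\<^sup>2)) \<longlonglongrightarrow> 0"
    and p: "1 \<le> p" and fL: "in_Lp M p f"
  shows "(\<lambda>n::nat. SUP t\<in>I. ennreal (Lp_norm M p
            (\<lambda>x. (\<Sum>i<n. f (\<theta> (k t i) x)) / real n - expectation f))) \<longlonglongrightarrow> 0"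
proof (rule ennreal_SUP_tendsto0)
  fix \<epsilon>0 :: real assume e0: "\<epsilon>0 > 0"
  note th_meas[measurable]
  have fm[measurable]: "f \<in> borel_measurable M" using fL by (simp add: in_Lp_def)
  have fp: "integrable M (\<lambda>x. \<bar>f x\<bar> powr p)" using fL by (simp add: in_Lp_def)
  have p0: "p > 0" using p by simp
  have fint: "integrable M f"
  proof (rule Bochner_Integration.integrable_bound[where f="\<lambda>x. 1 + \<bar>f x\<bar> powr p"])
    show "integrable M (\<lambda>x. 1 + \<bar>f x\<bar> powr p)" using fp by simp
    show "AE x in M. norm (f x) \<le> norm (1 + \<bar>f x\<bar> powr p)"
    proof (rule AE_I2)
      fix x
      have "\<bar>f x\<bar> \<le> 1 + \<bar>f x\<bar> powr p"
      proof (cases "\<bar>f x\<bar> \<le> 1")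
        case True then show ?thesis by (smt (verit) powr_ge_zero)
      next
        case False
        then have "\<bar>f x\<bar> powr 1 \<le> \<bar>f x\<bar> powr p" using p by (intro powr_mono) auto
        then show ?thesis using False by simp
      qed
      then show "norm (f x) \<le> norm (1 + \<bar>f x\<bar> powr p)" by simp
    qed
  qed simp
  define T where "T = \<epsilon>0 powr p"
  have T0: "T > 0" using e0 by (simp add: T_def)
  define \<tau> where "\<tau> = T / (4 * 3 powr (p - 1))"
  have tau0: "\<tau> > 0" using T0 by (simp add: \<tau>_def)
  define tr where "tr j x = max (- real j) (min (real j) (f x))" for j :: nat and x
  define d where "d j x = f x - tr j x" for j x
  have trm[measurable]: "tr j \<in> borel_measurable M" for j unfolding tr_def by measurable
  have dm[measurable]: "d j \<in> borel_measurable M" for j unfolding d_def by measurable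
  have dle: "\<bar>d j x\<bar> \<le> \<bar>f x\<bar>" for j x unfolding d_def tr_def by (auto simp: max_def min_def)
  have d0: "\<forall>\<^sub>F j in sequentially. d j x = 0" for x
  proof -
    have "d j x = 0" if "j \<ge> nat \<lceil>\<bar>f x\<bar>\<rceil>" for j
    proof -
      have "\<bar>f x\<bar> \<le> real j" using that by linarith
      then show ?thesis unfolding d_def tr_def by (auto simp: max_def min_def)
    qed
    then show ?thesis unfolding eventually_sequentially by blast
  qed
  have lim1: "(\<lambda>j. \<integral>x. \<bar>d j x\<bar> powr p \<partial>M) \<longlonglongrightarrow> (\<integral>x. 0 \<partial>M)"
  proof (rule integral_dominated_convergence[where w="\<lambda>x. \<bar>f x\<bar> powr p"])
    show "AE x in M. (\<lambda>j. \<bar>d j x\<bar> powr p) \<longlonglongrightarrow> 0"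
      by (rule AE_I2, rule tendsto_eventually) (use d0 in \<open>auto elim: eventually_mono\<close>)
    show "AE x in M. norm (\<bar>d j x\<bar> powr p) \<le> \<bar>f x\<bar> powr p" for j
      using dle p by (intro AE_I2) (auto intro!: powr_mono2)
  qed (use fp in auto)
  have lim2: "(\<lambda>j. \<integral>x. d j x \<partial>M) \<longlonglongrightarrow> (\<integral>x. 0 \<partial>M)"
  proof (rule integral_dominated_convergence[where w="\<lambda>x. \<bar>f x\<bar>"])
    show "AE x in M. (\<lambda>j. d j x) \<longlonglongrightarrow> 0"
      by (rule AE_I2, rule tendsto_eventually) (use d0 in auto)
    show "AE x in M. norm (d j x) \<le> \<bar>f x\<bar>" for j
      using dle by (intro AE_I2) auto
  qed (use fint in auto)
  define \<delta> where "\<delta> = \<tau> powr (1 / p)"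
  have delta0: "\<delta> > 0" using tau0 by (simp add: \<delta>_def)
  have ev1: "\<forall>\<^sub>F j in sequentially. (\<integral>x. \<bar>d j x\<bar> powr p \<partial>M) < \<tau>"
    using order_tendstoD(2)[OF lim1, of \<tau>] tau0 by simp
  have ev2: "\<forall>\<^sub>F j in sequentially. \<bar>\<integral>x. d j x \<partial>M\<bar> < \<delta>"
    using tendstoD[OF lim2 delta0] by (simp add: dist_real_def)
  obtain j0 where j1: "(\<integral>x. \<bar>d j0 x\<bar> powr p \<partial>M) < \<tau>" and j2: "\<bar>\<integral>x. d j0 x \<partial>M\<bar> < \<delta>"
    using eventually_happens'[OF _ eventually_conj[OF ev1 ev2]] by auto
  define g where "g = tr j0"
  define dd where "dd = d j0"
  define Eg where "Eg = (\<integral>x. g x \<partial>M)"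
  define Ed where "Ed = (\<integral>x. dd x \<partial>M)"
  have gm[measurable]: "g \<in> borel_measurable M" unfolding g_def by measurable
  have ddm[measurable]: "dd \<in> borel_measurable M" unfolding dd_def by measurable
  have gb: "\<bar>g x\<bar> \<le> real j0" for x unfolding g_def tr_def by (auto simp: max_def min_def)
  have gint: "integrable M g" by (rule bnd_integrable[where C="real j0"]) (auto intro: gb)
  have ddint: "integrable M dd"
    unfolding dd_def d_def using fint gint unfolding g_def by (rule Bochner_Integration.integrable_diff)
  have Ef: "expectation f = Eg + Ed"
  proof -
    have "f = (\<lambda>x. g x + dd x)" by (auto simp: g_def dd_def d_def)
    then show ?thesis unfolding Eg_def Ed_def using gint ddint by (simp add: Bochner_Integration.integral_add)
  qed
  have Edp: "\<bar>Ed\<bar> powr p < \<tau>"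
  proof -
    have "\<bar>Ed\<bar> powr p < \<delta> powr p" using j2 p0 unfolding Ed_def dd_def by (intro powr_less_mono2) auto
    also have "\<delta> powr p = \<tau>" using tau0 p0 by (simp add: \<delta>_def powr_powr)
    finally show ?thesis .
  qed
  have ddp: "(\<integral>x. \<bar>dd x\<bar> powr p \<partial>M) < \<tau>" using j1 unfolding dd_def .
  have ddpint: "integrable M (\<lambda>x. \<bar>dd x\<bar> powr p)"
  proof (rule Bochner_Integration.integrable_bound[OF fp])
    show "AE x in M. norm (\<bar>dd x\<bar> powr p) \<le> norm (\<bar>f x\<bar> powr p)"
      using dle p unfolding dd_def by (intro AE_I2) (auto intro!: powr_mono2)
  qed measurable
  obtain N where N: "\<And>n t. n \<ge> N \<Longrightarrow> t \<in> I \<Longrightarrow>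
      (\<integral>x. \<bar>(\<Sum>i<n. g (\<theta> (k t i) x)) / real n - Eg\<bar> powr p \<partial>M) \<le> \<tau>"
    using bounded_case[OF gm _ H p tau0, of "real j0"] gb unfolding Eg_def by blast
  show "\<exists>N. \<forall>n\<ge>N. \<forall>t\<in>I. Lp_norm M p (\<lambda>x. (\<Sum>i<n. f (\<theta> (k t i) x)) / real n - expectation f) \<le> \<epsilon>0"
  proof (intro exI[of _ "max N 1"] allI impI ballI)
    fix n t assume n: "max N 1 \<le> n" and t: "t \<in> I"
    have n0: "n > 0" and nN: "n \<ge> N" using n by auto
    define X2 where "X2 x = (\<Sum>i<n. g (\<theta> (k t i) x)) / real n - Eg" for x
    have X2m[measurable]: "X2 \<in> borel_measurable M" unfolding X2_def by measurable
    have X2p: "(\<integral>x. \<bar>X2 x\<bar> powr p \<partial>M) \<le> \<tau>" unfolding X2_def by (rule N[OF nN t])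
    define RHS where "RHS x = 3 powr (p - 1) * ((\<Sum>i<n. \<bar>dd (\<theta> (k t i) x)\<bar> powr p) / real n + \<bar>X2 x\<bar> powr p + \<bar>Ed\<bar> powr p)" for x
    have pw: "\<bar>(\<Sum>i<n. f (\<theta> (k t i) x)) / real n - expectation f\<bar> powr p \<le> RHS x" for x
    proof -
      have split: "(\<Sum>i<n. f (\<theta> (k t i) x)) / real n - expectation f
          = (\<Sum>i<n. dd (\<theta> (k t i) x)) / real n + X2 x + (- Ed)"
      proof -
        have "(\<Sum>i<n. f (\<theta> (k t i) x)) = (\<Sum>i<n. dd (\<theta> (k t i) x)) + (\<Sum>i<n. g (\<theta> (k t i) x))"
          by (simp add: sum.distrib[symmetric] g_def dd_def d_def)
        then show ?thesis unfolding X2_def Ef by (simp add: add_divide_distrib)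
      qed
      have a: "\<bar>(\<Sum>i<n. dd (\<theta> (k t i) x)) / real n\<bar> powr p \<le> (\<Sum>i<n. \<bar>dd (\<theta> (k t i) x)\<bar> powr p) / real n"
      proof -
        have ne: "{..<n} \<noteq> {}" using n0 by auto
        show ?thesis using abs_powr_avg[OF p _ ne, of "\<lambda>i. dd (\<theta> (k t i) x)"] by simp
      qed
      have "\<bar>(\<Sum>i<n. f (\<theta> (k t i) x)) / real n - expectation f\<bar> powr p
          \<le> 3 powr (p - 1) * (\<bar>(\<Sum>i<n. dd (\<theta> (k t i) x)) / real n\<bar> powr p + \<bar>X2 x\<bar> powr p + \<bar>- Ed\<bar> powr p)"
        unfolding split by (rule abs_powr_3[OF p])
      also have "\<dots> \<le> RHS x" unfolding RHS_def using a by (intro mult_left_mono) auto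
      finally show ?thesis .
    qed
    have X2b: "\<bar>X2 x\<bar> \<le> 2 * real j0" if x: "x \<in> space M" for x
    proof -
      have "\<bar>\<Sum>i<n. g (\<theta> (k t i) x)\<bar> \<le> (\<Sum>i<n. \<bar>g (\<theta> (k t i) x)\<bar>)" by (rule sum_abs)
      also have "\<dots> \<le> (\<Sum>i<n. real j0)" by (intro sum_mono gb)
      finally have "\<bar>(\<Sum>i<n. g (\<theta> (k t i) x)) / real n\<bar> \<le> real j0" using n0 by (simp add: divide_simps mult.commute)
      moreover have "\<bar>Eg\<bar> \<le> real j0" unfolding Eg_def by (rule bnd_integral) (auto intro: gb)
      ultimately show ?thesis unfolding X2_def by linarith
    qed
    have X2pint: "integrable M (\<lambda>x. \<bar>X2 x\<bar> powr p)"
    proof (rule bnd_integrable[where C="(2 * real j0) powr p"])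
      fix x assume "x \<in> space M"
      then show "\<bar>\<bar>X2 x\<bar> powr p\<bar> \<le> (2 * real j0) powr p" using X2b p by (auto intro!: powr_mono2)
    qed measurable
    have ddthint: "integrable M (\<lambda>x. \<bar>dd (\<theta> (k t i) x)\<bar> powr p)" for i
      using th_integrable[OF ddpint, of "k t i"] by simp
    have RHSint: "integrable M RHS"
      unfolding RHS_def using ddthint X2pint by (intro integrable_mult_right integrable_add integrable_divide integrable_sum) auto
    have RHSval: "(\<integral>x. RHS x \<partial>M) = 3 powr (p - 1) * ((\<integral>x. \<bar>dd x\<bar> powr p \<partial>M) + (\<integral>x. \<bar>X2 x\<bar> powr p \<partial>M) + \<bar>Ed\<bar> powr p)"
    proof -
      have "(\<integral>x. (\<Sum>i<n. \<bar>dd (\<theta> (k t i) x)\<bar> powr p) / real n \<partial>M) = (\<Sum>i<n. \<integral>x. \<bar>dd (\<theta> (k t i) x)\<bar> powr p \<partial>M) / real n"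
        using ddthint by (simp add: Bochner_Integration.integral_sum)
      also have "\<dots> = (\<Sum>i<n. \<integral>x. \<bar>dd x\<bar> powr p \<partial>M) / real n"
        by (intro arg_cong[where f="\<lambda>z. z / real n"] sum.cong refl th_int[where F="\<lambda>x. \<bar>dd x\<bar> powr p"]) measurable
      also have "\<dots> = (\<integral>x. \<bar>dd x\<bar> powr p \<partial>M)" using n0 by simp
      finally have e1: "(\<integral>x. (\<Sum>i<n. \<bar>dd (\<theta> (k t i) x)\<bar> powr p) / real n \<partial>M) = (\<integral>x. \<bar>dd x\<bar> powr p \<partial>M)" .
      have i1: "integrable M (\<lambda>x. (\<Sum>i<n. \<bar>dd (\<theta> (k t i) x)\<bar> powr p) / real n)"
        using ddthint by (intro integrable_divide integrable_sum) auto
      show ?thesis unfolding RHS_def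
        using e1 i1 X2pint by (simp add: Bochner_Integration.integral_add prob_space)
    qed
    have intle: "(\<integral>x. \<bar>(\<Sum>i<n. f (\<theta> (k t i) x)) / real n - expectation f\<bar> powr p \<partial>M) \<le> T"
    proof -
      have "(\<integral>x. \<bar>(\<Sum>i<n. f (\<theta> (k t i) x)) / real n - expectation f\<bar> powr p \<partial>M) \<le> (\<integral>x. RHS x \<partial>M)"
        by (rule integral_mono'[OF RHSint pw]) (unfold RHS_def, intro mult_nonneg_nonneg add_nonneg_nonneg divide_nonneg_nonneg sum_nonneg, auto)
      also have "\<dots> \<le> 3 powr (p - 1) * (\<tau> + \<tau> + \<tau>)"
        unfolding RHSval using ddp X2p Edp by (intro mult_left_mono) auto
      also have "\<dots> \<le> T" unfolding \<tau>_def using T0 by (simp add: field_simps)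
      finally show ?thesis .
    qed
    have "Lp_norm M p (\<lambda>x. (\<Sum>i<n. f (\<theta> (k t i) x)) / real n - expectation f) \<le> T powr (1 / p)"
      unfolding Lp_norm_def using intle p0 by (intro powr_mono2) auto
    also have "T powr (1 / p) = \<epsilon>0" using e0 p0 by (simp add: T_def powr_powr)
    finally show "Lp_norm M p (\<lambda>x. (\<Sum>i<n. f (\<theta> (k t i) x)) / real n - expectation f) \<le> \<epsilon>0" .
  qed
qed

end


theorem theorem4p8:
  fixes M :: "'a measure" and \<theta> :: "int ^ 'd \<Rightarrow> 'a \<Rightarrow> 'a"
    and I :: "'t set" and k :: "'t \<Rightarrow> nat \<Rightarrow> int ^ 'd"
  assumes "prob_space M"
    and "dparam_group M \<theta>"
    and "strongly_mixing M \<theta>"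
    and "\<And>m::nat. (\<lambda>n::nat. SUP t\<in>I. ennreal (real (card {(i, j). i \<in> {1..n} \<and> j \<in> {1..n} \<and>
              maxnorm (k t i - k t j) \<le> int m}) / (real n)\<^sup>2)) \<longlonglongrightarrow> 0"
    and "1 \<le> p" and "in_Lp M p f"
  shows "(\<lambda>n::nat. SUP t\<in>I. ennreal (Lp_norm M p
            (\<lambda>x. (\<Sum>i<n. f (\<theta> (k t i) x)) / real n - prob_space.expectation M f))) \<longlonglongrightarrow> 0"
proof -
  interpret mixsys M \<theta>
    by (intro mixsys.intro mixsys_axioms.intro assms(1-3))
  show ?thesis by (rule main_result[OF assms(4) assms(5) assms(6)])
qed

end
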